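(* Let $n\ge 1$, let $A\in\mathbb{R}^{n\times n}$, let $c>0$, and let $Z\in\{0,1\}^{n\times n}$. Consider the problem \[ \text{(P)}\qquad \min_{B,D\in\mathbb{R}^{n\times n}} \|A-B\|_F \quad\text{subject to}\quad \|D\|_2\le c,\quad Z_{ij}D_{ij}=0\ \text{for all } i,j,\quad D=|B|. \] Define $R=|A|$. For $\Lambda\in\mathbb{R}^{n\times n}$ and $M\in\mathbb{R}^{n\times n}$ with $M\ge 0$ (entrywise), let $D(\Lambda,M)=\Pi_c[R+M-\Lambda\odot Z]$ and \[ g(\Lambda,M)=\tfrac12\|D(\Lambda,M)-R\|_F^2+\Lambda\cdot Z\cdot D(\Lambda,M)-M\cdot D(\Lambda,M). \] Then problem (P) is equivalent to the problem $\max_{M\ge 0,\Lambda} g(\Lambda,M)$, where $g(\Lambda,M)=\min_{D:\|D\|_2\le c}\left(\tfrac12\|D-R\|_F^2+\Lambda\cdot Z\cdot D-M\cdot D\right)$ is the Lagrangian dual function (with multipliers $\Lambda$ for the constraints $Z_{ij}D_{ij}=0$ and $M\ge0$ for the constraints $D\ge 0$), and the gradients of $g$ are \[ \frac{dg}{d\Lambda}=Z\odot D(\Lambda,M),\qquad \frac{dg}{dM}=-D(\Lambda,M). \]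
   Context: $\|\cdot\|_F$ is the Frobenius norm and $\|\cdot\|_2$ the spectral norm (largest singular value). $|B|$ denotes the entrywise absolute value, $\odot$ the entrywise (Hadamard) product, and for matrices of equal size $X\cdot Y=\sum_{ij}X_{ij}Y_{ij}$ and the triple dot product $X\cdot Y\cdot W=\sum_{ij}X_{ij}Y_{ij}W_{ij}$. For a matrix $X$ with singular value decomposition $X=USV^T$, $\Pi_c[X]=US'V^T$ with $S'_{ii}=\min(S_{ii},c)$; this is the Frobenius-norm-closest matrix to $X$ among matrices with spectral norm at most $c$. The matrix $Z$ encodes a graph structure: $Z_{ij}=0$ if $(i,j)$ is an edge and $Z_{ij}=1$ otherwise. *)

theory Defs
  imports "HOL-Analysis.Analysis"
begin

type_synonym 'n sqmat = "real^'n^'n"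

definition frob :: "'n::finite sqmat \<Rightarrow> real" where
  "frob X = sqrt (\<Sum>i\<in>UNIV. \<Sum>j\<in>UNIV. (X$i$j)^2)"

definition spec :: "'n::finite sqmat \<Rightarrow> real" where
  "spec X = onorm (\<lambda>x. X *v x)"

definition absm :: "'n::finite sqmat \<Rightarrow> 'n sqmat" where
  "absm X = (\<chi> i j. \<bar>X$i$j\<bar>)"

definition hadamard :: "'n::finite sqmat \<Rightarrow> 'n sqmat \<Rightarrow> 'n sqmat" where
  "hadamard X Y = (\<chi> i j. X$i$j * Y$i$j)"

definition mdot :: "'n::finite sqmat \<Rightarrow> 'n sqmat \<Rightarrow> real" where
  "mdot X Y = (\<Sum>i\<in>UNIV. \<Sum>j\<in>UNIV. X$i$j * Y$i$j)"

definition tdot :: "'n::finite sqmat \<Rightarrow> 'n sqmat \<Rightarrow> 'n sqmat \<Rightarrow> real" where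
  "tdot X Y W = (\<Sum>i\<in>UNIV. \<Sum>j\<in>UNIV. X$i$j * Y$i$j * W$i$j)"

definition nonneg_mat :: "'n::finite sqmat \<Rightarrow> bool" where
  "nonneg_mat X \<longleftrightarrow> (\<forall>i j. X$i$j \<ge> 0)"

definition proj_c :: "real \<Rightarrow> 'n::finite sqmat \<Rightarrow> 'n sqmat" where
  "proj_c c X = (THE Y. \<exists>U S V. orthogonal_matrix U \<and> orthogonal_matrix V \<and>
      (\<forall>i j. i \<noteq> j \<longrightarrow> S$i$j = 0) \<and> (\<forall>i. S$i$i \<ge> 0) \<and>
      X = U ** S ** transpose V \<and>
      Y = U ** (\<chi> i j. if i = j then min (S$i$j) c else 0) ** transpose V)"

definition feasP :: "real \<Rightarrow> 'n::finite sqmat \<Rightarrow> 'n sqmat \<Rightarrow> 'n sqmat \<Rightarrow> bool" where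
  "feasP c Z B D \<longleftrightarrow> spec D \<le> c \<and> (\<forall>i j. Z$i$j * D$i$j = 0) \<and> D = absm B"

definition Dmat :: "real \<Rightarrow> 'n::finite sqmat \<Rightarrow> 'n sqmat \<Rightarrow> 'n sqmat \<Rightarrow> 'n sqmat \<Rightarrow> 'n sqmat" where
  "Dmat c A Z \<Lambda> M = proj_c c (absm A + M - hadamard \<Lambda> Z)"

definition Lag :: "'n::finite sqmat \<Rightarrow> 'n sqmat \<Rightarrow> 'n sqmat \<Rightarrow> 'n sqmat \<Rightarrow> 'n sqmat \<Rightarrow> real" where
  "Lag A Z \<Lambda> M D = (1/2) * (frob (D - absm A))^2 + tdot \<Lambda> Z D - mdot M D"

definition gdual :: "real \<Rightarrow> 'n::finite sqmat \<Rightarrow> 'n sqmat \<Rightarrow> 'n sqmat \<Rightarrow> 'n sqmat \<Rightarrow> real" where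
  "gdual c A Z \<Lambda> M = Lag A Z \<Lambda> M (Dmat c A Z \<Lambda> M)"

end

theory Submission
  imports Defs
begin
lemma norm_sqmat: "norm (X::real^'n::finite^'n) = sqrt (\<Sum>i\<in>UNIV. \<Sum>j\<in>UNIV. (X$i$j)^2)"
  unfolding norm_vec_def L2_set_def
  by (simp add: real_sqrt_pow2 sum_nonneg)

lemma frob_norm: "frob X = norm X"
  by (simp add: frob_def norm_sqmat)

lemma inner_sqmat: "inner (X::real^'n::finite^'n) Y = (\<Sum>i\<in>UNIV. \<Sum>j\<in>UNIV. X$i$j * Y$i$j)"
  by (simp add: inner_vec_def)

lemma mdot_inner: "mdot X Y = inner X Y"
  by (simp add: mdot_def inner_sqmat)

lemma tdot_inner: "tdot L Z D = inner (hadamard L Z) D"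
  by (simp add: tdot_def inner_sqmat hadamard_def)

lemma linear_mv_left: "linear (\<lambda>D::real^'n::finite^'m::finite. D *v x)"
  by (rule linearI) (simp_all add: matrix_vector_mult_def vec_eq_iff sum.distrib sum_distrib_left algebra_simps)

lemma cont_mv_left: "continuous_on UNIV (\<lambda>D::real^'n::finite^'m::finite. D *v x)"
  using linear_mv_left linear_continuous_on linear_conv_bounded_linear by blast

lemma spec_le_iff: "spec D \<le> c \<longleftrightarrow> (\<forall>x. norm (D *v x) \<le> c * norm x)"
proof
  assume "spec D \<le> c"
  then show "\<forall>x. norm (D *v x) \<le> c * norm x"
    using onorm[OF matrix_vector_mul_bounded_linear[of D]] unfolding spec_def
    by (meson mult_right_mono norm_ge_zero order_trans)
next
  assume "\<forall>x. norm (D *v x) \<le> c * norm x"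
  then show "spec D \<le> c" unfolding spec_def by (intro onorm_le) auto
qed

definition Kc :: "real \<Rightarrow> ('n::finite sqmat) set" where
  "Kc c = {D. spec D \<le> c}"

lemma Kc_Inter: "Kc c = (\<Inter>x. {D. norm (D *v x) \<le> c * norm x})"
  by (auto simp: Kc_def spec_le_iff)

lemma closed_Kc: "closed (Kc c)"
  unfolding Kc_Inter
  by (intro closed_INT ballI closed_Collect_le continuous_on_norm cont_mv_left continuous_on_const)

lemma convex_Kc: "convex (Kc c)"
  unfolding Kc_Inter
proof (intro convex_INT ballI convexI, simp)
  fix x and D1 D2 :: "real^'n^'n" and u v :: real
  assume h: "norm (D1 *v x) \<le> c * norm x" "norm (D2 *v x) \<le> c * norm x" "0 \<le> u" "0 \<le> v" "u + v = 1"
  have "(u *\<^sub>R D1 + v *\<^sub>R D2) *v x = u *\<^sub>R (D1 *v x) + v *\<^sub>R (D2 *v x)"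
    by (simp add: matrix_vector_mult_def vec_eq_iff sum.distrib sum_distrib_left algebra_simps)
  then have "norm ((u *\<^sub>R D1 + v *\<^sub>R D2) *v x) \<le> u * norm (D1 *v x) + v * norm (D2 *v x)"
    using h by (metis abs_of_nonneg norm_scaleR norm_triangle_ineq)
  also have "\<dots> \<le> u * (c * norm x) + v * (c * norm x)"
    using h by (intro add_mono mult_left_mono) auto
  also have "\<dots> = c * norm x" using h(5) by (simp add: algebra_simps) (metis distrib_left mult.commute mult_1)
  finally show "norm ((u *\<^sub>R D1 + v *\<^sub>R D2) *v x) \<le> c * norm x" .
qed

lemma norm_mv_le: "norm ((D::real^'n::finite^'m::finite) *v x) \<le> norm D * norm x"
proof -
  have "norm (D *v x) = sqrt (\<Sum>i\<in>UNIV. (inner (D$i) x)^2)"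
    unfolding norm_vec_def L2_set_def by (simp add: matrix_vector_mult_def inner_vec_def mult.commute)
  also have "\<dots> \<le> sqrt (\<Sum>i\<in>UNIV. (norm (D$i) * norm x)^2)"
    by (intro real_sqrt_le_mono sum_mono) (simp add: abs_le_square_iff[symmetric] Cauchy_Schwarz_ineq2)
  also have "\<dots> = norm D * norm x"
    unfolding norm_vec_def[of D] L2_set_def
    by (simp add: power_mult_distrib sum_distrib_right[symmetric] real_sqrt_mult)
  finally show ?thesis .
qed

lemma ball_in_Kc: "c > 0 \<Longrightarrow> norm D \<le> c \<Longrightarrow> D \<in> Kc c"
  unfolding Kc_def spec_le_iff
proof (intro CollectI allI)
  fix x assume "norm D \<le> c"
  then show "norm (D *v x) \<le> c * norm x"
    using norm_mv_le[of D x] mult_right_mono[of "norm D" c "norm x"] by simp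
qed

lemma quad_zero:
  fixes a K :: real
  assumes "\<And>t. 2*t*a \<le> t^2 * K"
  shows "a = 0"
proof (rule ccontr)
  assume "a \<noteq> 0"
  define d where "d = \<bar>K\<bar> + 1"
  define t where "t = a / d"
  have pos: "d > 0" by (simp add: d_def add_pos_nonneg)
  have "2*t*a \<le> t^2 * K" by (rule assms)
  then have "2*t*a * d^2 \<le> t^2 * K * d^2" by (rule mult_right_mono) simp
  moreover have "2*t*a*d^2 = 2*a^2*d" using pos by (simp add: t_def power2_eq_square field_simps)
  moreover have "t^2*K*d^2 = a^2*K" using pos by (simp add: t_def power2_eq_square field_simps)
  ultimately have 1: "2*a^2*d \<le> a^2*K" by simp
  have "a^2 > 0" using \<open>a \<noteq> 0\<close> by simp
  moreover have "K < 2*d" unfolding d_def by (cases "K \<ge> 0") auto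
  ultimately have "a^2 * K < a^2 * (2*d)" by (simp add: mult_strict_left_mono)
  with 1 show False by simp
qed

lemma orth_image_basis:
  fixes X :: "real^'n::finite^'m::finite" and W :: "(real^'n) set"
  assumes "subspace W"
  shows "\<exists>B. B \<subseteq> W \<and> span B = W \<and> (\<forall>x\<in>B. norm x = 1) \<and> pairwise orthogonal B \<and>
            (\<forall>a\<in>B. \<forall>b\<in>B. a \<noteq> b \<longrightarrow> inner (X *v a) (X *v b) = 0)"
  using assms
proof (induction "dim W" arbitrary: W rule: less_induct)
  case less
  show ?case
  proof (cases "W = {0}")
    case True
    then show ?thesis by (intro exI[of _ "{}"]) auto
  next
    case False
    then obtain w where w: "w \<in> W" "w \<noteq> 0"
      using less.prems subspace_0 by blast
    let ?S = "sphere 0 1 \<inter> W"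
    have cS: "compact ?S"
      by (intro compact_Int_closed compact_sphere closed_subspace less.prems)
    have neS: "?S \<noteq> {}"
    proof -
      have "w /\<^sub>R norm w \<in> ?S" using w less.prems by (simp add: subspace_scale)
      then show ?thesis by blast
    qed
    have contS: "continuous_on ?S (\<lambda>x. norm (X *v x))"
      by (intro continuous_on_norm linear_continuous_on matrix_vector_mul_bounded_linear)
    obtain u where u: "u \<in> ?S" "\<And>y. y \<in> ?S \<Longrightarrow> norm (X *v y) \<le> norm (X *v u)"
      using continuous_attains_sup[OF cS neS contS] by blast
    have uW: "u \<in> W" and nu: "norm u = 1" using u(1) by auto
    have maxW: "norm (X *v x) \<le> norm (X *v u) * norm x" if "x \<in> W" for x
    proof (cases "x = 0")
      case True then show ?thesis by simp
    next
      case False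
      have "x /\<^sub>R norm x \<in> ?S" using that False less.prems by (simp add: subspace_scale)
      then have "norm (X *v (x /\<^sub>R norm x)) \<le> norm (X *v u)" by (rule u(2))
      then have "norm (X *v x) / norm x \<le> norm (X *v u)"
        by (simp add: matrix_vector_mult_scaleR divide_inverse_commute)
      then show ?thesis using False by (simp add: divide_le_eq mult.commute)
    qed
    have key: "inner (X *v u) (X *v y) = 0" if "y \<in> W" "inner u y = 0" for y
    proof -
      let ?a = "inner (X *v u) (X *v y)"
      let ?m = "norm (X *v u)"
      let ?K = "?m^2 * (norm y)^2 - (norm (X *v y))^2"
      have "2*t*?a \<le> t^2 * ?K" for t
      proof -
        have xW: "u + t *\<^sub>R y \<in> W" using uW that(1) less.prems
          by (simp add: subspace_add subspace_scale)
        have "norm (X *v (u + t *\<^sub>R y)) \<le> ?m * norm (u + t *\<^sub>R y)" by (rule maxW[OF xW])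
        then have "(norm (X *v (u + t *\<^sub>R y)))^2 \<le> (?m * norm (u + t *\<^sub>R y))^2"
          by (rule power_mono) simp
        also have "\<dots> = ?m^2 * (norm (u + t *\<^sub>R y))^2" by (simp add: power_mult_distrib)
        finally have h: "(norm (X *v u + t *\<^sub>R (X *v y)))^2 \<le> ?m^2 * (norm (u + t *\<^sub>R y))^2"
          by (simp add: matrix_vector_right_distrib matrix_vector_mult_scaleR)
        have e1: "(norm (X *v u + t *\<^sub>R (X *v y)))^2 = ?m^2 + 2*t*?a + t^2 * (norm (X *v y))^2"
          unfolding power2_norm_eq_inner by (simp add: inner_add_left inner_add_right inner_commute algebra_simps power2_eq_square)
        have e2: "(norm (u + t *\<^sub>R y))^2 = 1 + t^2 * (norm y)^2"
          using nu that(2) unfolding power2_norm_eq_inner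
          by (simp add: inner_add_left inner_add_right inner_commute algebra_simps norm_eq_1 power2_eq_square)
        show ?thesis using h unfolding e1 e2 by (simp add: algebra_simps)
      qed
      then show ?thesis by (rule quad_zero)
    qed
    define W' where "W' = W \<inter> {x. inner u x = 0}"
    have sW': "subspace W'" unfolding W'_def
      by (intro subspace_inter less.prems subspace_hyperplane)
    have "u \<notin> W'" using nu unfolding W'_def by (auto simp: norm_eq_1)
    then have "W' \<subset> W" using uW unfolding W'_def by blast
    then have "span W' \<subset> span W" using sW' less.prems by (simp add: span_eq_iff[THEN iffD2])
    then have "dim W' < dim W" by (rule dim_psubset)
    then obtain B' where B': "B' \<subseteq> W'" "span B' = W'" "\<forall>x\<in>B'. norm x = 1" "pairwise orthogonal B'"
        "\<forall>a\<in>B'. \<forall>b\<in>B'. a \<noteq> b \<longrightarrow> inner (X *v a) (X *v b) = 0"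
      using less.hyps[OF _ sW'] by blast
    show ?thesis
    proof (intro exI[of _ "insert u B'"] conjI)
      show sub: "insert u B' \<subseteq> W" using uW B'(1) unfolding W'_def by auto
      show "span (insert u B') = W"
      proof
        show "span (insert u B') \<subseteq> W"
          using span_mono[OF sub] less.prems by (simp add: span_eq_iff[THEN iffD2])
        show "W \<subseteq> span (insert u B')"
        proof
          fix x assume xW: "x \<in> W"
          have "x - inner u x *\<^sub>R u \<in> W'"
            using xW uW nu less.prems unfolding W'_def
            by (simp add: subspace_diff subspace_scale inner_diff_right norm_eq_1)
          then have "x - inner u x *\<^sub>R u \<in> span (insert u B')"
            using B'(2) span_mono[of B' "insert u B'"] by auto
          moreover have "inner u x *\<^sub>R u \<in> span (insert u B')"
            by (intro span_mul span_base) simp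
          ultimately have "(x - inner u x *\<^sub>R u) + inner u x *\<^sub>R u \<in> span (insert u B')"
            by (rule span_add)
          then show "x \<in> span (insert u B')" by simp
        qed
      qed
      show "\<forall>x\<in>insert u B'. norm x = 1" using nu B'(3) by auto
      show "pairwise orthogonal (insert u B')"
        using B'(1,4) unfolding W'_def
        by (intro pairwise_orthogonal_insert) (auto simp: orthogonal_def)
      show "\<forall>a\<in>insert u B'. \<forall>b\<in>insert u B'. a \<noteq> b \<longrightarrow> inner (X *v a) (X *v b) = 0"
        using B'(1,5) key unfolding W'_def by (auto simp: inner_commute subset_iff)
    qed
  qed
qed

lemma orthonormal_complete:
  fixes S0 :: "(real^'n::finite) set"
  assumes S0: "pairwise orthogonal S0" "\<And>x. x \<in> S0 \<Longrightarrow> norm x = 1"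
  obtains T where "S0 \<subseteq> T" "pairwise orthogonal T" "\<And>x. x \<in> T \<Longrightarrow> norm x = 1"
    "card T = CARD('n)" "finite T"
proof -
  obtain U where U: "U \<inter> insert 0 S0 = {}" "pairwise orthogonal (S0 \<union> U)"
      "span (S0 \<union> U) = span (S0 \<union> UNIV)"
    using orthogonal_extension_strong[OF S0(1)] by blast
  define N where "N x = (if x \<in> S0 then x else x /\<^sub>R norm x)" for x :: "real^'n"
  define T where "T = N ` (S0 \<union> U)"
  have NU: "N x = x /\<^sub>R norm x" if "x \<in> U" for x using that U(1) by (auto simp: N_def)
  have NS: "N x = x" if "x \<in> S0" for x using that by (auto simp: N_def)
  have nT: "norm x = 1" if "x \<in> T" for x
    using that S0(2) U(1) unfolding T_def N_def by (auto simp: field_simps)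
  have oT: "pairwise orthogonal T"
    unfolding pairwise_def T_def
  proof (intro ballI impI)
    fix x y assume x: "x \<in> N ` (S0 \<union> U)" and y: "y \<in> N ` (S0 \<union> U)" and xy: "x \<noteq> y"
    from x obtain x0 where x0: "x0 \<in> S0 \<union> U" "x = N x0" by auto
    from y obtain y0 where y0: "y0 \<in> S0 \<union> U" "y = N y0" by auto
    have "x0 \<noteq> y0" using xy x0 y0 by auto
    then have "orthogonal x0 y0" using U(2) x0(1) y0(1) by (auto simp: pairwise_def)
    then show "orthogonal x y" using x0(2) y0(2) unfolding N_def by (simp add: orthogonal_clauses)
  qed
  have "0 \<notin> T" using nT by force
  then have iT: "independent T" using oT pairwise_orthogonal_independent by blast
  have "S0 \<union> U \<subseteq> span T"
  proof
    fix x assume "x \<in> S0 \<union> U"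
    then show "x \<in> span T"
    proof
      assume "x \<in> S0" then show ?thesis unfolding T_def by (metis NS UnI1 imageI span_base)
    next
      assume xU: "x \<in> U"
      then have "x /\<^sub>R norm x \<in> span T" unfolding T_def by (metis NU UnI2 imageI span_base)
      then have "norm x *\<^sub>R (x /\<^sub>R norm x) \<in> span T" by (rule span_mul)
      moreover have "x \<noteq> 0" using xU U(1) by auto
      ultimately show ?thesis by simp
    qed
  qed
  then have "span (S0 \<union> U) \<subseteq> span T" by (rule span_minimal) simp
  then have spT: "span T = UNIV" using U(3) by auto
  have "dim (span T) = card T" by (rule dim_span_eq_card_independent[OF iT])
  then have "card T = CARD('n)" unfolding spT by simp
  moreover have "S0 \<subseteq> T" unfolding T_def using NS by force
  ultimately show ?thesis using that[of T] nT oT iT independent_imp_finite by blast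
qed

lemma svd_exists:
  fixes X :: "real^'n::finite^'n"
  shows "\<exists>U S V. orthogonal_matrix U \<and> orthogonal_matrix V \<and>
      (\<forall>i j. i \<noteq> j \<longrightarrow> S$i$j = 0) \<and> (\<forall>i. S$i$i \<ge> 0) \<and> X = U ** S ** transpose V"
proof -
  obtain B :: "(real^'n) set" where B: "span B = UNIV" "\<forall>x\<in>B. norm x = 1" "pairwise orthogonal B"
      "\<forall>a\<in>B. \<forall>b\<in>B. a \<noteq> b \<longrightarrow> inner (X *v a) (X *v b) = 0"
    using orth_image_basis[of "UNIV :: (real^'n) set" X] subspace_UNIV by blast
  have "0 \<notin> B" using B(2) by force
  then have iB: "independent B" using B(3) pairwise_orthogonal_independent by blast
  have cB: "card B = CARD('n)"
    using dim_span_eq_card_independent[OF iB] B(1) by simp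
  obtain e where e: "bij_betw e (UNIV::'n set) B"
    using finite_same_card_bij[of "UNIV::'n set" B] cB independent_imp_finite[OF iB] by auto
  have eB: "e i \<in> B" for i using e by (auto simp: bij_betw_def)
  have einj: "e i = e j \<Longrightarrow> i = j" for i j using e by (auto simp: bij_betw_def inj_on_def)
  define V where "V = (\<chi> a i. e i $ a)"
  have colV: "column i V = e i" for i by (simp add: V_def column_def vec_eq_iff)
  have oV: "orthogonal_matrix V"
    unfolding orthogonal_matrix_orthonormal_columns colV
    using B(2,3) eB einj by (metis pairwise_def)
  define \<sigma> where "\<sigma> i = norm (X *v e i)" for i
  define F where "F = {i. \<sigma> i \<noteq> 0}"
  define g where "g i = (1 / \<sigma> i) *\<^sub>R (X *v e i)" for i
  have ng: "norm (g i) = 1" if "i \<in> F" for i using that by (simp add: g_def F_def \<sigma>_def)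
  have og: "orthogonal (g i) (g j)" if "i \<noteq> j" for i j
  proof -
    have "inner (X *v e i) (X *v e j) = 0" using B(4) eB einj that by metis
    then show ?thesis unfolding g_def orthogonal_def by simp
  qed
  have ginj: "inj_on g F"
  proof (rule inj_onI)
    fix i j assume "i \<in> F" "j \<in> F" "g i = g j"
    then show "i = j" using og[of i j] ng[of i] by (metis orthogonal_self norm_zero zero_neq_one)
  qed
  define S0 where "S0 = g ` F"
  have oS0: "pairwise orthogonal S0" unfolding S0_def pairwise_def using og by (metis imageE)
  have nS0: "\<And>x. x \<in> S0 \<Longrightarrow> norm x = 1" unfolding S0_def using ng by auto
  obtain T where T: "S0 \<subseteq> T" "pairwise orthogonal T" "\<And>x. x \<in> T \<Longrightarrow> norm x = 1"
      "card T = CARD('n)" "finite T"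
    using orthonormal_complete[OF oS0 nS0] by blast
  have "card (T - S0) = CARD('n) - card F"
    using T(1,4,5) card_Diff_subset[of S0 T] finite_subset[OF T(1) T(5)] card_image[OF ginj]
    unfolding S0_def by simp
  moreover have "card (UNIV - F) = CARD('n) - card F"
    by (simp add: card_Diff_subset)
  ultimately obtain \<beta> where \<beta>: "bij_betw \<beta> (UNIV - F) (T - S0)"
    using finite_same_card_bij[of "UNIV - F" "T - S0"] T(5) by auto
  define u where "u i = (if i \<in> F then g i else \<beta> i)" for i
  have uT: "u i \<in> T" for i
    by (cases "i \<in> F") (use bij_betwE[OF \<beta>] T(1) in \<open>auto simp: u_def S0_def\<close>)
  have nu: "norm (u i) = 1" for i using uT T(3) by blast
  have ou: "orthogonal (u i) (u j)" if "i \<noteq> j" for i j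
  proof -
    have "u i \<noteq> u j"
    proof (cases "i \<in> F"; cases "j \<in> F")
      assume "i \<in> F" "j \<in> F" then show ?thesis using ginj that by (auto simp: u_def inj_on_def)
    next
      assume "i \<in> F" "j \<notin> F" then show ?thesis using \<beta> by (auto simp: u_def S0_def bij_betw_def)
    next
      assume "i \<notin> F" "j \<in> F" then show ?thesis using \<beta> by (auto simp: u_def S0_def bij_betw_def)
    next
      assume "i \<notin> F" "j \<notin> F" then show ?thesis using \<beta> that by (auto simp: u_def bij_betw_def inj_on_def)
    qed
    then show ?thesis using T(2) uT by (auto simp: pairwise_def)
  qed
  define U where "U = (\<chi> a i. u i $ a)"
  have colU: "column i U = u i" for i by (simp add: U_def column_def vec_eq_iff)
  have oU: "orthogonal_matrix U"
    unfolding orthogonal_matrix_orthonormal_columns colU using nu ou by auto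
  define S :: "real^'n^'n" where "S = (\<chi> i j. if i = j then \<sigma> i else 0)"
  have Xe: "X *v e i = \<sigma> i *\<^sub>R u i" for i
  proof (cases "i \<in> F")
    case True then show ?thesis by (simp add: u_def g_def F_def)
  next
    case False then have "\<sigma> i = 0" by (simp add: F_def)
    then show ?thesis by (simp add: \<sigma>_def)
  qed
  have XV: "X ** V = U ** S"
  proof -
    have "(X ** V) $ a $ i = (U ** S) $ a $ i" for a i
    proof -
      have "(X ** V) $ a $ i = (X *v e i) $ a"
        by (simp add: matrix_matrix_mult_def matrix_vector_mult_def V_def)
      also have "\<dots> = \<sigma> i * u i $ a" by (simp add: Xe)
      also have "\<dots> = (U ** S) $ a $ i"
        by (simp add: matrix_matrix_mult_def S_def U_def if_distrib cong: if_cong)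
      finally show ?thesis .
    qed
    then show ?thesis by (simp add: vec_eq_iff)
  qed
  have "X = X ** (V ** transpose V)"
    using oV by (simp add: orthogonal_matrix_def)
  also have "\<dots> = U ** S ** transpose V" by (simp add: matrix_mul_assoc XV)
  finally have "X = U ** S ** transpose V" .
  moreover have "\<forall>i j. i \<noteq> j \<longrightarrow> S$i$j = 0" "\<forall>i. S$i$i \<ge> 0" by (simp_all add: S_def \<sigma>_def)
  ultimately show ?thesis using oU oV by blast
qed

lemma orth_norm:
  fixes U :: "real^'n::finite^'n"
  assumes "orthogonal_matrix U"
  shows "norm (U *v x) = norm x"
proof -
  have "orthogonal_transformation ((*v) U)"
    using assms by (simp add: orthogonal_transformation_matrix matrix_of_matrix_vector_mul)
  then show ?thesis by (rule orthogonal_transformation_norm)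
qed

lemma col_inner:
  fixes U W V :: "real^'n::finite^'n"
  shows "inner (column i U) (W *v column j V) = (transpose U ** W ** V)$i$j"
  by (simp add: inner_vec_def column_def matrix_vector_mult_def matrix_matrix_mult_def
      transpose_def sum_distrib_left sum_distrib_right algebra_simps) (rule sum.swap)

lemma diag_mult:
  fixes U E :: "real^'n::finite^'n"
  assumes "\<forall>i j. i \<noteq> j \<longrightarrow> E$i$j = 0"
  shows "U ** E = (\<chi> a k. U$a$k * E$k$k)"
proof -
  have "(\<Sum>l\<in>UNIV. U$a$l * E$l$k) = U$a$k * E$k$k" for a k
    by (rule sum.mono_neutral_cong_right[where S="{k}", simplified]) (use assms in auto)
  then show ?thesis by (simp add: matrix_matrix_mult_def vec_eq_iff)
qed

lemma inner_UEV:
  fixes U E V W :: "real^'n::finite^'n"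
  assumes "\<forall>i j. i \<noteq> j \<longrightarrow> E$i$j = 0"
  shows "inner (U ** E ** transpose V) W = (\<Sum>i\<in>UNIV. E$i$i * (transpose U ** W ** V)$i$i)"
proof -
  define f where "f a b k = U$a$k * E$k$k * V$b$k * W$a$b" for a b k
  have "inner (U ** E ** transpose V) W = (\<Sum>a\<in>UNIV. \<Sum>b\<in>UNIV. \<Sum>k\<in>UNIV. f a b k)"
    unfolding diag_mult[OF assms]
    by (simp add: inner_sqmat matrix_matrix_mult_def transpose_def f_def sum_distrib_right)
  also have "\<dots> = (\<Sum>a\<in>UNIV. \<Sum>k\<in>UNIV. \<Sum>b\<in>UNIV. f a b k)"
    by (rule sum.cong[OF refl], rule sum.swap)
  also have "\<dots> = (\<Sum>k\<in>UNIV. \<Sum>a\<in>UNIV. \<Sum>b\<in>UNIV. f a b k)"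
    by (rule sum.swap)
  also have "\<dots> = (\<Sum>k\<in>UNIV. \<Sum>b\<in>UNIV. \<Sum>a\<in>UNIV. f a b k)"
    by (rule sum.cong[OF refl], rule sum.swap)
  also have "\<dots> = (\<Sum>i\<in>UNIV. E$i$i * (transpose U ** W ** V)$i$i)"
    by (simp add: matrix_matrix_mult_def transpose_def f_def sum_distrib_left sum_distrib_right algebra_simps)
  finally show ?thesis .
qed

lemma mm_diff_l: "(A::real^'n::finite^'n) ** (B - C) = A ** B - A ** C"
  by (simp add: matrix_matrix_mult_def vec_eq_iff sum_subtractf algebra_simps)

lemma mm_diff_r: "((B::real^'n::finite^'n) - C) ** A = B ** A - C ** A"
  by (simp add: matrix_matrix_mult_def vec_eq_iff sum_subtractf algebra_simps)

lemma diag_mv: "\<forall>i j. i \<noteq> j \<longrightarrow> (D::real^'n::finite^'n)$i$j = 0 \<Longrightarrow> (D *v w) $ i = D$i$i * w$i"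
  by (simp add: matrix_vector_mult_def, rule sum.mono_neutral_cong_right[where S="{i}", simplified]) auto

lemma diag_norm:
  fixes D :: "real^'n::finite^'n"
  assumes "\<forall>i j. i \<noteq> j \<longrightarrow> D$i$j = 0" "\<forall>i. 0 \<le> D$i$i \<and> D$i$i \<le> c"
  shows "norm (D *v w) \<le> c * norm w"
proof -
  have c: "c \<ge> 0" using spec[OF assms(2), of undefined] by linarith
  have "(norm (D *v w))^2 = (\<Sum>i\<in>UNIV. (D$i$i * w$i)^2)"
    unfolding power2_norm_eq_inner by (simp add: inner_vec_def diag_mv[OF assms(1)] power2_eq_square)
  also have "\<dots> \<le> (\<Sum>i\<in>UNIV. c^2 * (w$i)^2)"
  proof (rule sum_mono)
    fix i
    have "(D$i$i)^2 \<le> c^2" using assms(2) by (intro power_mono) auto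
    then show "(D$i$i * w$i)^2 \<le> c^2 * (w$i)^2"
      by (simp add: power_mult_distrib mult_right_mono)
  qed
  also have "\<dots> = (c * norm w)^2"
    unfolding power_mult_distrib power2_norm_eq_inner
    by (simp add: inner_vec_def sum_distrib_left power2_eq_square)
  finally have h: "(norm (D *v w))^2 \<le> (c * norm w)^2" .
  show ?thesis using power2_le_imp_le[OF h] c by simp
qed

lemma svd_proj:
  fixes U S V X Y :: "real^'n::finite^'n"
  assumes c: "c > 0" and oU: "orthogonal_matrix U" and oV: "orthogonal_matrix V"
    and dS: "\<forall>i j. i \<noteq> j \<longrightarrow> S$i$j = 0" and pS: "\<forall>i. S$i$i \<ge> 0"
    and X: "X = U ** S ** transpose V"
    and Y: "Y = U ** (\<chi> i j. if i = j then min (S$i$j) c else 0) ** transpose V"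
  shows "Y \<in> Kc c \<and> (\<forall>D \<in> Kc c. dist X Y \<le> dist X D)"
proof -
  define S' :: "real^'n^'n" where "S' = (\<chi> i j. if i = j then min (S$i$j) c else 0)"
  define E :: "real^'n^'n" where "E = (\<chi> i j. if i = j then S$i$i - min (S$i$i) c else 0)"
  have dS': "\<forall>i j. i \<noteq> j \<longrightarrow> S'$i$j = 0" and dE: "\<forall>i j. i \<noteq> j \<longrightarrow> E$i$j = 0"
    by (simp_all add: S'_def E_def)
  have SE: "S - S' = E" using dS by (simp add: vec_eq_iff S'_def E_def)
  have tUU: "transpose U ** U = mat 1" and tVV: "transpose V ** V = mat 1"
    using oU oV by (simp_all add: orthogonal_matrix_def)
  have oVt: "orthogonal_matrix (transpose V)" using oV by simp
  have XY: "X - Y = U ** E ** transpose V"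
    unfolding X Y S'_def[symmetric] SE[symmetric] by (simp add: mm_diff_l mm_diff_r)
  have YK: "Y \<in> Kc c"
    unfolding Kc_def spec_le_iff
  proof (intro CollectI allI)
    fix x
    have "Y *v x = U *v (S' *v (transpose V *v x))"
      by (simp only: Y S'_def matrix_vector_mul_assoc matrix_mul_assoc)
    then have "norm (Y *v x) = norm (S' *v (transpose V *v x))" by (simp add: orth_norm[OF oU])
    also have "\<dots> \<le> c * norm (transpose V *v x)"
      by (rule diag_norm[OF dS']) (use pS c in \<open>simp add: S'_def\<close>)
    also have "\<dots> = c * norm x" by (simp only: orth_norm[OF oVt])
    finally show "norm (Y *v x) \<le> c * norm x" .
  qed
  have tUYV: "transpose U ** Y ** V = S'"
  proof -
    have "transpose U ** Y ** V = (transpose U ** U) ** (S' ** (transpose V ** V))"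
      by (simp only: Y S'_def matrix_mul_assoc)
    then show ?thesis by (simp add: tUU tVV matrix_mul_lid matrix_mul_rid)
  qed
  have var: "inner (X - Y) (D - Y) \<le> 0" if D: "D \<in> Kc c" for D
  proof -
    have "inner (X - Y) (D - Y) = (\<Sum>i\<in>UNIV. E$i$i * (transpose U ** (D - Y) ** V)$i$i)"
      unfolding XY by (rule inner_UEV[OF dE])
    also have "\<dots> = (\<Sum>i\<in>UNIV. E$i$i * ((transpose U ** D ** V)$i$i - S'$i$i))"
      by (simp add: mm_diff_l mm_diff_r tUYV)
    also have "\<dots> \<le> 0"
    proof (rule sum_nonpos)
      fix i
      have "\<bar>(transpose U ** D ** V)$i$i\<bar> = \<bar>inner (column i U) (D *v column i V)\<bar>"
        by (simp add: col_inner)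
      also have "\<dots> \<le> norm (column i U) * norm (D *v column i V)"
        by (rule Cauchy_Schwarz_ineq2)
      also have "\<dots> \<le> 1 * (c * 1)"
      proof -
        have n1: "norm (column i U) = 1" "norm (column i V) = 1"
          using oU oV by (simp_all add: orthogonal_matrix_orthonormal_columns)
        have "norm (D *v column i V) \<le> c * norm (column i V)"
          using D by (simp add: Kc_def spec_le_iff)
        then show ?thesis using n1 by simp
      qed
      finally have b: "(transpose U ** D ** V)$i$i \<le> c" by simp
      show "E$i$i * ((transpose U ** D ** V)$i$i - S'$i$i) \<le> 0"
      proof (cases "S$i$i \<le> c")
        case True then show ?thesis by (simp add: E_def)
      next
        case False
        then have "S'$i$i = c" "E$i$i \<ge> 0" by (simp_all add: S'_def E_def)
        then show ?thesis using b by (simp add: mult_nonneg_nonpos)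
      qed
    qed
    finally show ?thesis .
  qed
  have "dist X Y \<le> dist X D" if D: "D \<in> Kc c" for D
  proof -
    have "(dist X D)^2 = (dist X Y)^2 + (norm (Y - D))^2 - 2 * inner (X - Y) (D - Y)"
      unfolding dist_norm power2_norm_eq_inner
      by (simp add: inner_diff_left inner_diff_right inner_commute algebra_simps)
    then have "(dist X Y)^2 \<le> (dist X D)^2" using var[OF D] by (smt (verit) zero_le_power2)
    then show ?thesis using power2_le_imp_le by force
  qed
  then show ?thesis using YK by blast
qed

lemma zero_Kc: "c \<ge> 0 \<Longrightarrow> 0 \<in> Kc c"
  by (simp add: Kc_def spec_le_iff)

lemma proj_c_closest:
  assumes c: "c > 0"
  shows "proj_c c X = closest_point (Kc c) X"
proof -
  define P where "P Y \<longleftrightarrow> (\<exists>U S V. orthogonal_matrix U \<and> orthogonal_matrix V \<and>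
      (\<forall>i j. i \<noteq> j \<longrightarrow> S$i$j = 0) \<and> (\<forall>i. S$i$i \<ge> 0) \<and>
      X = U ** S ** transpose V \<and>
      Y = U ** (\<chi> i j. if i = j then min (S$i$j) c else 0) ** transpose V)" for Y
  have all: "Y = closest_point (Kc c) X" if "P Y" for Y
  proof -
    from that obtain U S V where h: "orthogonal_matrix U" "orthogonal_matrix V"
      "\<forall>i j. i \<noteq> j \<longrightarrow> S$i$j = 0" "\<forall>i. S$i$i \<ge> 0"
      "X = U ** S ** transpose V"
      "Y = U ** (\<chi> i j. if i = j then min (S$i$j) c else 0) ** transpose V"
      unfolding P_def by blast
    have "Y \<in> Kc c \<and> (\<forall>D \<in> Kc c. dist X Y \<le> dist X D)"
      by (rule svd_proj[OF c h])
    then show ?thesis by (intro closest_point_unique convex_Kc closed_Kc) auto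
  qed
  obtain U S V where h: "orthogonal_matrix U" "orthogonal_matrix V"
      "\<forall>i j. i \<noteq> j \<longrightarrow> S$i$j = 0" "\<forall>i. S$i$i \<ge> 0" "X = U ** S ** transpose V"
    using svd_exists[of X] by blast
  have hp: "P (U ** (\<chi> i j. if i = j then min (S$i$j) c else 0) ** transpose V)"
    unfolding P_def using h by blast
  have "P (closest_point (Kc c) X)" using all[OF hp] hp by simp
  then have "(THE Y. P Y) = closest_point (Kc c) X"
    by (rule the_equality) (rule all)
  then show ?thesis unfolding proj_c_def P_def .
qed

lemma Lag_eq:
  "Lag A Z L M D = (1/2) * (norm (D - (absm A + M - hadamard L Z)))^2
     - (1/2) * (norm (absm A + M - hadamard L Z))^2 + (1/2) * (norm (absm A))^2"
  unfolding Lag_def frob_norm tdot_inner mdot_inner power2_norm_eq_inner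
  by (simp add: inner_diff_left inner_diff_right inner_add_left inner_add_right inner_commute algebra_simps)

definition PK :: "real \<Rightarrow> 'n::finite sqmat \<Rightarrow> 'n sqmat" where
  "PK c Y = closest_point (Kc c) Y"

lemma Dmat_PK: "c > 0 \<Longrightarrow> Dmat c A Z L M = PK c (absm A + M - hadamard L Z)"
  by (simp add: Dmat_def PK_def proj_c_closest)

lemma PK_in: "c > 0 \<Longrightarrow> PK c Y \<in> Kc c"
  unfolding PK_def using closest_point_in_set[OF closed_Kc] zero_Kc[of c] by auto

lemma PK_le: "c > 0 \<Longrightarrow> D \<in> Kc c \<Longrightarrow> norm (PK c Y - Y) \<le> norm (D - Y)"
  unfolding PK_def using closest_point_le[OF closed_Kc, where x=D and a=Y]
  by (simp add: dist_norm norm_minus_commute)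

lemma part1:
  assumes c: "c > 0" and D: "spec D \<le> c"
  shows "spec (Dmat c A Z L M) \<le> c \<and> gdual c A Z L M \<le> Lag A Z L M D"
proof
  show "spec (Dmat c A Z L M) \<le> c" unfolding Dmat_PK[OF c] using PK_in[OF c] by (simp add: Kc_def)
  let ?Y = "absm A + M - hadamard L Z"
  have "norm (PK c ?Y - ?Y) \<le> norm (D - ?Y)" using PK_le[OF c] D by (simp add: Kc_def)
  then have "(norm (PK c ?Y - ?Y))^2 \<le> (norm (D - ?Y))^2" by (simp add: power_mono)
  then show "gdual c A Z L M \<le> Lag A Z L M D"
    unfolding gdual_def Lag_eq Dmat_PK[OF c] by simp
qed

lemma deriv_quad:
  fixes f :: "'a::real_normed_vector \<Rightarrow> real"
  assumes bl: "bounded_linear f'" and b: "\<And>y. \<bar>f y - f x - f' (y - x)\<bar> \<le> C * (norm (y - x))^2"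
  shows "(f has_derivative f') (at x)"
  unfolding has_derivative_at_alt
proof (intro conjI bl allI impI)
  fix e :: real assume e: "e > 0"
  define d where "d = e / (\<bar>C\<bar> + 1)"
  have d: "d > 0" using e by (simp add: d_def add_pos_nonneg)
  have Cd: "\<bar>C\<bar> * d \<le> e"
    using e unfolding d_def by (simp add: field_simps)
  show "\<exists>d>0. \<forall>y. norm (y - x) < d \<longrightarrow> norm (f y - f x - f' (y - x)) \<le> e * norm (y - x)"
  proof (intro exI[of _ d] conjI d allI impI)
    fix y assume y: "norm (y - x) < d"
    have "norm (f y - f x - f' (y - x)) \<le> C * (norm (y - x))^2" using b[of y] by simp
    also have "\<dots> \<le> \<bar>C\<bar> * norm (y - x) * norm (y - x)"
      by (simp add: power2_eq_square mult.assoc mult_right_mono)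
    also have "\<dots> \<le> \<bar>C\<bar> * d * norm (y - x)"
      using y by (intro mult_right_mono mult_left_mono) auto
    also have "\<dots> \<le> e * norm (y - x)"
      using Cd by (intro mult_right_mono) auto
    finally show "norm (f y - f x - f' (y - x)) \<le> e * norm (y - x)" .
  qed
qed

definition kfun :: "real \<Rightarrow> 'n::finite sqmat \<Rightarrow> real" where
  "kfun c y = (1/2) * (norm (y - PK c y))^2 - (1/2) * (norm y)^2"

lemma PK_lip: "c > 0 \<Longrightarrow> norm (PK c b - PK c a) \<le> norm (b - a)"
  unfolding PK_def using closest_point_lipschitz[OF convex_Kc closed_Kc, of c b a] zero_Kc[of c]
  by (auto simp: dist_norm)

lemma k_deriv:
  fixes a :: "real^'n::finite^'n"
  assumes c: "c > 0"
  shows "(kfun c has_derivative (\<lambda>d. inner (- PK c a) d)) (at a)"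
proof (rule deriv_quad[where C=1])
  show "bounded_linear (\<lambda>d. inner (- PK c a) d)" by (rule bounded_linear_inner_right)
  fix b :: "real^'n^'n"
  define p where "p = PK c a"
  define q where "q = PK c b"
  define d where "d = b - a"
  have hb: "(norm (q - b))^2 \<le> (norm (p - b))^2"
    unfolding p_def q_def using PK_le[OF c PK_in[OF c]] by (simp add: power_mono)
  have ha: "(norm (p - a))^2 \<le> (norm (q - a))^2"
    unfolding p_def q_def using PK_le[OF c PK_in[OF c]] by (simp add: power_mono)
  have lip: "norm (q - p) \<le> norm d" unfolding p_def q_def d_def by (rule PK_lip[OF c])
  have cs: "\<bar>inner (q - p) d\<bar> \<le> norm d * norm d"
    using Cauchy_Schwarz_ineq2[of "q - p" d] lip by (smt (verit) mult_right_mono norm_ge_zero)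
  have bd: "b = a + d" unfolding d_def by simp
  have ex: "kfun c b - kfun c a - inner (- PK c a) (b - a)
      = (1/2) * (norm (q - b))^2 - (1/2) * (norm (p - a))^2 + inner p d
        - (1/2) * ((norm b)^2 - (norm a)^2)"
    unfolding kfun_def p_def q_def d_def by (simp add: norm_minus_commute algebra_simps)
  have e1: "(norm (p - b))^2 = (norm (p - a))^2 - 2 * inner (p - a) d + inner d d"
    unfolding bd power2_norm_eq_inner by (simp add: inner_diff_left inner_diff_right inner_add_left inner_add_right inner_commute algebra_simps)
  have e2: "(norm (q - a))^2 = (norm (q - b))^2 + 2 * inner (q - b) d + inner d d"
    unfolding bd power2_norm_eq_inner by (simp add: inner_diff_left inner_diff_right inner_add_left inner_add_right inner_commute algebra_simps)
  have e3: "(norm b)^2 = (norm a)^2 + 2 * inner a d + inner d d"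
    unfolding bd power2_norm_eq_inner by (simp add: inner_diff_left inner_diff_right inner_add_left inner_add_right inner_commute algebra_simps)
  have e4: "inner (q - b) d = inner (q - p) d + inner p d - inner a d - inner d d"
    unfolding bd by (simp add: inner_diff_left inner_add_left algebra_simps)
  have e5: "inner (p - a) d = inner p d - inner a d" by (simp add: inner_diff_left)
  have dd: "inner d d = (norm d)^2" by (simp add: power2_norm_eq_inner)
  have cs2: "inner (q - p) d \<le> (norm d)^2" "- ((norm d)^2) \<le> inner (q - p) d"
    using cs by (simp_all add: power2_eq_square abs_le_iff)
  have up: "(1/2) * (norm (q - b))^2 - (1/2) * (norm (p - a))^2 + inner p d
        - (1/2) * ((norm b)^2 - (norm a)^2) \<le> (norm d)^2"
    using hb ha e1 e2 e3 e4 e5 cs2 dd by argo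
  have lo: "- ((norm d)^2) \<le> (1/2) * (norm (q - b))^2 - (1/2) * (norm (p - a))^2 + inner p d
        - (1/2) * ((norm b)^2 - (norm a)^2)"
    using hb ha e1 e2 e3 e4 e5 cs2 dd by argo
  show "\<bar>kfun c b - kfun c a - inner (- PK c a) (b - a)\<bar> \<le> 1 * (norm (b - a))^2"
    unfolding ex using up lo unfolding d_def by (simp add: abs_le_iff)
qed

lemma hadamard_linear: "bounded_linear (\<lambda>p::('n::finite sqmat \<times> 'n sqmat). snd p - hadamard (fst p) Z)"
proof -
  have "linear (\<lambda>p::('n::finite sqmat \<times> 'n sqmat). snd p - hadamard (fst p) Z)"
    by (rule linearI) (simp_all add: hadamard_def vec_eq_iff algebra_simps)
  then show ?thesis by (simp add: linear_conv_bounded_linear)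
qed

lemma part2:
  assumes c: "c > 0"
  shows "((\<lambda>(L, N). gdual c A Z L N) has_derivative
           (\<lambda>(dL, dN). mdot (hadamard Z (Dmat c A Z \<Lambda> M)) dL - mdot (Dmat c A Z \<Lambda> M) dN))
        (at (\<Lambda>, M))"
proof -
  define Yf where "Yf p = absm A + snd p - hadamard (fst p) Z" for p :: "'a sqmat \<times> 'a sqmat"
  define lin where "lin p = snd p - hadamard (fst p) Z" for p :: "'a sqmat \<times> 'a sqmat"
  have Ylin: "Yf p = absm A + lin p" for p unfolding Yf_def lin_def by (simp add: algebra_simps)
  have blin: "bounded_linear lin" unfolding lin_def by (rule hadamard_linear)
  have dY: "(Yf has_derivative lin) (at (\<Lambda>, M))"
    unfolding Ylin[abs_def]
    by (rule has_derivative_add[OF has_derivative_const bounded_linear_imp_has_derivative[OF blin], simplified])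
  have dk: "((\<lambda>p. kfun c (Yf p)) has_derivative (\<lambda>p. inner (- PK c (Yf (\<Lambda>, M))) (lin p))) (at (\<Lambda>, M))"
    by (rule has_derivative_compose[OF dY k_deriv[OF c]])
  have d2: "((\<lambda>p. kfun c (Yf p) + (1/2) * (norm (absm A))^2) has_derivative
      (\<lambda>p. inner (- PK c (Yf (\<Lambda>, M))) (lin p))) (at (\<Lambda>, M))"
    by (rule has_derivative_add_const[OF dk])
  have f_eq: "(\<lambda>(L, N). gdual c A Z L N) = (\<lambda>p. kfun c (Yf p) + (1/2) * (norm (absm A))^2)"
    by (auto simp: fun_eq_iff gdual_def Lag_eq Dmat_PK[OF c] kfun_def Yf_def norm_minus_commute)
  have D_eq: "Dmat c A Z \<Lambda> M = PK c (Yf (\<Lambda>, M))" by (simp add: Dmat_PK[OF c] Yf_def)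
  have g_eq: "(\<lambda>(dL, dN). mdot (hadamard Z (Dmat c A Z \<Lambda> M)) dL - mdot (Dmat c A Z \<Lambda> M) dN)
      = (\<lambda>p. inner (- PK c (Yf (\<Lambda>, M))) (lin p))"
    unfolding D_eq
    by (auto simp: fun_eq_iff lin_def mdot_inner inner_diff_right inner_sqmat hadamard_def algebra_simps sum_subtractf)
  show ?thesis unfolding f_eq g_eq by (rule d2)
qed

definition Eij :: "'n::finite \<Rightarrow> 'n \<Rightarrow> 'n sqmat" where
  "Eij i j = (\<chi> a b. if a = i \<and> b = j then 1 else 0)"

lemma inner_Eij: "inner (Eij i j) D = D$i$j"
proof -
  have "inner (Eij i j) D = (\<Sum>a\<in>UNIV. \<Sum>b\<in>UNIV. if a = i \<and> b = j then D$a$b else 0)"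
    unfolding inner_sqmat Eij_def by (intro sum.cong refl) auto
  also have "\<dots> = (\<Sum>a\<in>UNIV. if a = i then D$a$j else 0)"
    by (rule sum.cong[OF refl]) (simp add: sum.delta)
  also have "\<dots> = D$i$j" by (simp add: sum.delta)
  finally show ?thesis .
qed

definition Lset :: "'n::finite sqmat \<Rightarrow> 'n sqmat set" where
  "Lset Z = {D. \<forall>i j. Z$i$j * D$i$j = 0 \<and> 0 \<le> D$i$j}"

lemma closed_Lset: "closed (Lset Z)"
proof -
  have "Lset Z = (\<Inter>i. \<Inter>j. {D. inner ((Z$i$j) *\<^sub>R Eij i j) D = 0} \<inter> {D. inner (Eij i j) D \<ge> 0})"
    by (auto simp: Lset_def inner_Eij)
  then show ?thesis by (simp only:) (intro closed_INT ballI closed_Int closed_hyperplane closed_halfspace_ge)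
qed

lemma convex_Lset: "convex (Lset Z)"
proof (rule convexI)
  fix x y :: "'a sqmat" and u v :: real
  assume x: "x \<in> Lset Z" and y: "y \<in> Lset Z" and u: "0 \<le> u" and v: "0 \<le> v"
  show "u *\<^sub>R x + v *\<^sub>R y \<in> Lset Z"
    unfolding Lset_def
  proof (intro CollectI allI conjI)
    fix i j
    have "Z$i$j * (u *\<^sub>R x + v *\<^sub>R y)$i$j = u * (Z$i$j * x$i$j) + v * (Z$i$j * y$i$j)"
      by (simp add: algebra_simps)
    moreover have "Z$i$j * x$i$j = 0" "Z$i$j * y$i$j = 0" using x y unfolding Lset_def by blast+
    ultimately show "Z$i$j * (u *\<^sub>R x + v *\<^sub>R y)$i$j = 0" by simp
    show "0 \<le> (u *\<^sub>R x + v *\<^sub>R y)$i$j" using x y u v by (simp add: Lset_def)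
  qed
qed

lemma zero_Lset: "0 \<in> Lset Z" by (simp add: Lset_def)

lemma lim_le:
  fixes b x \<beta> :: real
  assumes "\<And>\<alpha>. \<alpha> > 0 \<Longrightarrow> b \<le> x + \<beta> * \<alpha>"
  shows "b \<le> x"
proof (rule ccontr)
  assume "\<not> b \<le> x"
  then have bx: "b - x > 0" by simp
  define \<alpha> where "\<alpha> = (b - x) / (2 * (\<bar>\<beta>\<bar> + 1))"
  have pos: "\<alpha> > 0" using bx by (simp add: \<alpha>_def add_pos_nonneg)
  have "\<beta> * \<alpha> \<le> \<bar>\<beta>\<bar> * \<alpha>" using pos by (simp add: mult_right_mono)
  also have "\<bar>\<beta>\<bar> * \<alpha> = (b - x) * (\<bar>\<beta>\<bar> / (2 * (\<bar>\<beta>\<bar> + 1)))"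
    by (simp add: \<alpha>_def)
  also have "\<dots> < (b - x) * 1"
  proof (rule mult_strict_left_mono[OF _ bx])
    show "\<bar>\<beta>\<bar> / (2 * (\<bar>\<beta>\<bar> + 1)) < 1"
      by (simp add: divide_less_eq add_pos_nonneg)
  qed
  finally have "x + \<beta> * \<alpha> < b" by simp
  with assms[OF pos] show False by simp
qed

lemma var_closest:
  fixes S :: "('n::finite sqmat) set"
  assumes "x \<in> S" "\<forall>z\<in>S. inner (a - x) (z - x) \<le> 0"
  shows "\<forall>z\<in>S. dist a x \<le> dist a z"
proof
  fix z assume z: "z \<in> S"
  have "(dist a z)^2 = (dist a x)^2 + (norm (z - x))^2 - 2 * inner (a - x) (z - x)"
    unfolding dist_norm power2_norm_eq_inner
    by (simp add: inner_diff_left inner_diff_right inner_commute algebra_simps)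
  then have "(dist a x)^2 \<le> (dist a z)^2" using assms(2) z by (smt (verit) zero_le_power2)
  then show "dist a x \<le> dist a z" using power2_le_imp_le by force
qed

lemma inner_Eij2: "inner D (Eij i j) = D$i$j"
  using inner_Eij[of i j D] by (simp add: inner_commute)

lemma duality:
  fixes A Z :: "real^'n::finite^'n"
  assumes c: "c > 0" and Z: "\<forall>i j. Z$i$j \<in> {0, 1}"
  defines "Ds \<equiv> closest_point (Kc c \<inter> Lset Z) (absm A)"
  shows "Ds \<in> Kc c \<inter> Lset Z \<and> (\<exists>\<Lambda> M. nonneg_mat M \<and> Dmat c A Z \<Lambda> M = Ds \<and>
           gdual c A Z \<Lambda> M = (1/2) * (norm (Ds - absm A))^2)"
proof -
  define R where "R = absm A"
  define C where "C = Kc c \<inter> Lset Z"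
  have clC: "closed C" unfolding C_def by (intro closed_Int closed_Kc closed_Lset)
  have cvC: "convex C" unfolding C_def by (intro convex_Int convex_Kc convex_Lset)
  have C0: "0 \<in> C" unfolding C_def using zero_Kc[of c] c zero_Lset by auto
  have DsC: "Ds \<in> C" unfolding Ds_def C_def[symmetric] using closest_point_in_set[OF clC] C0 by auto
  then have DsK: "Ds \<in> Kc c" and DsL: "Ds \<in> Lset Z" unfolding C_def by auto
  define nv where "nv = R - Ds"
  have hv: "inner nv (y - Ds) \<le> 0" if "y \<in> C" for y
    unfolding nv_def R_def Ds_def C_def[symmetric] using closest_point_dot[OF cvC clC that] .
  define S1 where "S1 = {p :: 'n sqmat \<times> real. fst p \<in> Kc c \<and> snd p \<le> inner nv (fst p - Ds)}"
  define S2 where "S2 = {p :: 'n sqmat \<times> real. fst p \<in> Lset Z \<and> 0 < snd p}"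
  have cS1: "convex S1"
    unfolding S1_def
  proof (rule convexI, clarsimp)
    fix y1 y2 :: "'n sqmat" and a1 a2 u v :: real
    assume h: "y1 \<in> Kc c" "a1 \<le> inner nv (y1 - Ds)" "y2 \<in> Kc c" "a2 \<le> inner nv (y2 - Ds)"
      "0 \<le> u" "0 \<le> v" "u + v = 1"
    show "u *\<^sub>R y1 + v *\<^sub>R y2 \<in> Kc c \<and> u * a1 + v * a2 \<le> inner nv (u *\<^sub>R y1 + v *\<^sub>R y2 - Ds)"
    proof
      show "u *\<^sub>R y1 + v *\<^sub>R y2 \<in> Kc c" using convexD[OF convex_Kc] h by blast
      have "inner nv (u *\<^sub>R y1 + v *\<^sub>R y2 - Ds) = u * inner nv (y1 - Ds) + v * inner nv (y2 - Ds)"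
        using h(7) by (simp add: inner_diff_right inner_add_right algebra_simps)
          (metis add_diff_cancel_left' diff_add_cancel distrib_left mult.commute mult.right_neutral)
      moreover have "u * a1 + v * a2 \<le> u * inner nv (y1 - Ds) + v * inner nv (y2 - Ds)"
        using h by (intro add_mono mult_left_mono) auto
      ultimately show "u * a1 + v * a2 \<le> inner nv (u *\<^sub>R y1 + v *\<^sub>R y2 - Ds)" by simp
    qed
  qed
  have cS2: "convex S2"
    unfolding S2_def
  proof (rule convexI, clarsimp)
    fix y1 y2 :: "'n sqmat" and a1 a2 u v :: real
    assume h: "y1 \<in> Lset Z" "0 < a1" "y2 \<in> Lset Z" "0 < a2" "0 \<le> u" "0 \<le> v" "u + v = 1"
    show "u *\<^sub>R y1 + v *\<^sub>R y2 \<in> Lset Z \<and> 0 < u * a1 + v * a2"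
    proof
      show "u *\<^sub>R y1 + v *\<^sub>R y2 \<in> Lset Z" using convexD[OF convex_Lset] h by blast
      show "0 < u * a1 + v * a2"
      proof (cases "u = 0")
        case True then show ?thesis using h by simp
      next
        case False then have "u * a1 > 0" using h by simp
        moreover have "v * a2 \<ge> 0" using h by simp
        ultimately show ?thesis by linarith
      qed
    qed
  qed
  have ne1: "S1 \<noteq> {}" using DsK unfolding S1_def by (auto intro!: exI[of _ "(Ds, 0)"])
  have ne2: "S2 \<noteq> {}" using DsL unfolding S2_def by (auto intro!: exI[of _ "(Ds, 1)"] exI[of _ "1::real"])
  have dis: "S1 \<inter> S2 = {}"
  proof (rule ccontr)
    assume "S1 \<inter> S2 \<noteq> {}"
    then obtain y a where "y \<in> Kc c" "a \<le> inner nv (y - Ds)" "y \<in> Lset Z" "0 < a"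
      unfolding S1_def S2_def by auto
    moreover have "inner nv (y - Ds) \<le> 0" using hv calculation unfolding C_def by auto
    ultimately show False by linarith
  qed
  obtain a b where ab: "a \<noteq> 0" "\<forall>x\<in>S1. inner a x \<le> b" "\<forall>x\<in>S2. inner a x \<ge> b"
    using separating_hyperplane_sets[OF cS1 cS2 ne1 ne2 dis] by blast
  obtain w \<beta> where a: "a = (w, \<beta>)" by (cases a)
  have F1: "inner w y + \<beta> * \<alpha> \<le> b" if "y \<in> Kc c" "\<alpha> \<le> inner nv (y - Ds)" for y \<alpha>
    using ab(2) that unfolding S1_def a by auto
  have F2: "b \<le> inner w y + \<beta> * \<alpha>" if "y \<in> Lset Z" "0 < \<alpha>" for y \<alpha>
    using ab(3) that unfolding S2_def a by auto
  have "inner w Ds - \<beta> \<le> b" using F1[OF DsK, of "-1"] by simp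
  moreover have "b \<le> inner w Ds + \<beta>" using F2[OF DsL, of 1] by simp
  ultimately have \<beta>0: "\<beta> \<ge> 0" by linarith
  have "inner w Ds \<le> b" using F1[OF DsK, of 0] by simp
  moreover have "b \<le> inner w Ds" by (rule lim_le[where \<beta>=\<beta>]) (rule F2[OF DsL])
  ultimately have bD: "b = inner w Ds" by simp
  have F1': "inner w y + \<beta> * inner nv (y - Ds) \<le> inner w Ds" if "y \<in> Kc c" for y
    using F1[OF that order_refl] bD by simp
  have F2': "inner w Ds \<le> inner w y" if "y \<in> Lset Z" for y
    using lim_le[where \<beta>=\<beta>] F2[OF that] bD by simp
  have \<beta>pos: "\<beta> > 0"
  proof (rule ccontr)
    assume "\<not> \<beta> > 0"
    then have \<beta>z: "\<beta> = 0" using \<beta>0 by simp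
    then have wnz: "w \<noteq> 0" using ab(1) a by (auto simp: zero_prod_def)
    have "0 \<le> inner w Ds" using F1'[OF zero_Kc] c \<beta>z by simp
    moreover have "inner w Ds \<le> 0" using F2'[OF zero_Lset] by simp
    ultimately have wD: "inner w Ds = 0" by simp
    define y where "y = (c / norm w) *\<^sub>R w"
    have "norm y = c" using wnz c by (simp add: y_def)
    then have "y \<in> Kc c" by (intro ball_in_Kc[OF c]) simp
    then have "inner w y \<le> 0" using F1' \<beta>z wD by fastforce
    moreover have "inner w y = c * norm w"
      using wnz by (simp add: y_def power2_norm_eq_inner[symmetric] power2_eq_square)
    moreover have "c * norm w > 0" using wnz c by simp
    ultimately show False by simp
  qed
  define n where "n = (- 1 / \<beta>) *\<^sub>R w"
  have hn: "inner n (y - Ds) \<le> 0" if "y \<in> Lset Z" for y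
  proof -
    have "inner n (y - Ds) = - (inner w y - inner w Ds) / \<beta>"
      by (simp add: n_def inner_diff_right diff_divide_distrib)
    moreover have "inner w y - inner w Ds \<ge> 0" using F2'[OF that] by simp
    ultimately show ?thesis using \<beta>pos by (simp add: divide_nonpos_pos)
  qed
  have hK: "inner (nv - n) (y - Ds) \<le> 0" if "y \<in> Kc c" for y
  proof -
    have "inner (nv - n) (y - Ds) = (\<beta> * inner nv (y - Ds) + (inner w y - inner w Ds)) / \<beta>"
      using \<beta>pos by (simp add: n_def inner_diff_left inner_diff_right inner_add_left field_simps)
    moreover have "\<beta> * inner nv (y - Ds) + (inner w y - inner w Ds) \<le> 0" using F1'[OF that] by simp
    ultimately show ?thesis using \<beta>pos by (simp add: divide_nonpos_pos)
  qed
  have DsZ: "Z$i$j * Ds$i$j = 0" "Ds$i$j \<ge> 0" for i j using DsL unfolding Lset_def by auto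
  have nle: "n$i$j \<le> 0" if "Z$i$j = 0" for i j
  proof -
    have "Ds + Eij i j \<in> Lset Z"
      unfolding Lset_def using DsZ that by (auto simp: Eij_def)
    from hn[OF this] show ?thesis by (simp add: inner_Eij2 inner_diff_right)
  qed
  have ncs: "n$i$j * Ds$i$j = 0" if "Z$i$j = 0" for i j
  proof -
    have "Ds - Ds$i$j *\<^sub>R Eij i j \<in> Lset Z"
      unfolding Lset_def using DsZ that by (auto simp: Eij_def)
    from hn[OF this] have "- (Ds$i$j * n$i$j) \<le> 0"
      by (simp add: inner_Eij2 inner_diff_right)
    moreover have "n$i$j * Ds$i$j \<le> 0" using nle[OF that] DsZ(2)[of i j] by (simp add: mult_nonpos_nonneg)
    ultimately show ?thesis by (simp add: mult.commute)
  qed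
  have Z01: "Z$i$j = 0 \<or> Z$i$j = 1" for i j using Z by blast
  define \<Lambda> :: "'n sqmat" where "\<Lambda> = (\<chi> i j. n$i$j * Z$i$j)"
  define M :: "'n sqmat" where "M = (\<chi> i j. - n$i$j * (1 - Z$i$j))"
  have Mnn: "nonneg_mat M"
    unfolding nonneg_mat_def M_def
  proof (intro allI)
    fix i j
    show "0 \<le> (\<chi> i j. - n$i$j * (1 - Z$i$j))$i$j"
      using Z01[of i j] nle[of i j] by auto
  qed
  have Yeq: "R + M - hadamard \<Lambda> Z = R - n"
  proof -
    have "M$i$j - (hadamard \<Lambda> Z)$i$j = - n$i$j" for i j
      using Z01[of i j] by (auto simp: M_def hadamard_def \<Lambda>_def)
    then show ?thesis by (simp add: vec_eq_iff)
  qed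
  have "\<forall>z\<in>Kc c. dist (R - n) Ds \<le> dist (R - n) z"
    using var_closest[OF DsK] hK by (simp add: nv_def algebra_simps)
  then have "Ds = closest_point (Kc c) (R - n)"
    by (intro closest_point_unique convex_Kc closed_Kc DsK)
  then have DsPK: "Ds = PK c (R - n)" unfolding PK_def .
  have Dm: "Dmat c A Z \<Lambda> M = Ds"
  proof -
    have "Dmat c A Z \<Lambda> M = PK c (R + M - hadamard \<Lambda> Z)" unfolding R_def by (rule Dmat_PK[OF c])
    also have "\<dots> = PK c (R - n)" by (simp only: Yeq)
    finally show ?thesis using DsPK by simp
  qed
  have t0: "tdot \<Lambda> Z Ds = 0"
  proof -
    have h: "\<Lambda>$i$j * Z$i$j * Ds$i$j = 0" for i j
      using DsZ(1)[of i j] by (simp add: \<Lambda>_def)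
    show ?thesis unfolding tdot_def by (simp only: h sum.neutral_const)
  qed
  have m0: "mdot M Ds = 0"
  proof -
    have h: "M$i$j * Ds$i$j = 0" for i j
      using Z01[of i j] ncs[of i j] by (auto simp: M_def)
    show ?thesis unfolding mdot_def by (simp only: h sum.neutral_const)
  qed
  have "gdual c A Z \<Lambda> M = (1/2) * (norm (Ds - absm A))^2"
    unfolding gdual_def Dm Lag_def t0 m0 frob_norm by simp
  then show ?thesis using Mnn Dm DsC unfolding C_def by blast
qed

lemma feas_C:
  assumes "feasP c Z B D"
  shows "D \<in> Kc c \<inter> Lset Z"
proof -
  have s: "spec D \<le> c" and z: "\<forall>i j. Z$i$j * D$i$j = 0" and d: "D = absm B"
    using assms unfolding feasP_def by blast+
  have "0 \<le> D$i$j" for i j unfolding d absm_def by simp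
  then show ?thesis using s z by (simp add: Kc_def Lset_def)
qed

lemma norm_sqrt_sum: "norm (X::real^'n::finite^'n) = sqrt (\<Sum>i\<in>UNIV. \<Sum>j\<in>UNIV. (X$i$j)^2)"
  by (rule norm_sqmat)

lemma frob_ge:
  assumes "feasP c Z B D"
  shows "norm (D - absm A) \<le> frob (A - B)"
proof -
  have D: "D = absm B" using assms by (simp add: feasP_def)
  have "norm (D - absm A) = sqrt (\<Sum>i\<in>UNIV. \<Sum>j\<in>UNIV. (\<bar>B$i$j\<bar> - \<bar>A$i$j\<bar>)^2)"
    unfolding norm_sqmat D by (simp add: absm_def)
  also have "\<dots> \<le> sqrt (\<Sum>i\<in>UNIV. \<Sum>j\<in>UNIV. (A$i$j - B$i$j)^2)"
  proof (intro real_sqrt_le_mono sum_mono)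
    fix i j
    have "\<bar>\<bar>B$i$j\<bar> - \<bar>A$i$j\<bar>\<bar> \<le> \<bar>A$i$j - B$i$j\<bar>" by (rule abs_triangle_ineq3[THEN order_trans]) (simp add: abs_minus_commute)
    then show "(\<bar>B$i$j\<bar> - \<bar>A$i$j\<bar>)^2 \<le> (A$i$j - B$i$j)^2"
      by (simp add: abs_le_square_iff)
  qed
  also have "\<dots> = frob (A - B)" by (simp add: frob_def)
  finally show ?thesis .
qed

definition Bst :: "'n::finite sqmat \<Rightarrow> 'n sqmat \<Rightarrow> 'n sqmat" where
  "Bst A D = (\<chi> i j. if A$i$j \<ge> 0 then D$i$j else - D$i$j)"

lemma Bst_feas:
  assumes "D \<in> Kc c \<inter> Lset Z"
  shows "feasP c Z (Bst A D) D"
proof -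
  have nn: "D$i$j \<ge> 0" for i j using assms by (auto simp: Lset_def)
  have "D = absm (Bst A D)" by (simp add: vec_eq_iff absm_def Bst_def nn)
  then show ?thesis using assms by (auto simp: feasP_def Kc_def Lset_def)
qed

lemma Bst_frob:
  assumes "D \<in> Lset Z"
  shows "frob (A - Bst A D) = norm (D - absm A)"
proof -
  have nn: "D$i$j \<ge> 0" for i j using assms by (auto simp: Lset_def)
  have "(A$i$j - Bst A D $i$j)^2 = (D$i$j - \<bar>A$i$j\<bar>)^2" for i j
    by (cases "A$i$j \<ge> 0") (auto simp: Bst_def power2_eq_square algebra_simps)
  then show ?thesis unfolding frob_def norm_sqmat by (simp add: absm_def)
qed

lemma weak_dual:
  assumes c: "c > 0" and M: "nonneg_mat M" and D: "D \<in> Kc c \<inter> Lset Z"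
  shows "gdual c A Z L M \<le> Lag A Z L M D" "Lag A Z L M D \<le> (1/2) * (norm (D - absm A))^2"
proof -
  have "spec D \<le> c" using D by (simp add: Kc_def)
  then show "gdual c A Z L M \<le> Lag A Z L M D" using part1[OF c] by blast
  have "tdot L Z D = 0"
  proof -
    have h: "L$i$j * Z$i$j * D$i$j = 0" for i j using D by (auto simp: Lset_def)
    show ?thesis unfolding tdot_def by (simp only: h sum.neutral_const)
  qed
  moreover have "mdot M D \<ge> 0"
    unfolding mdot_def using M D by (auto simp: nonneg_mat_def Lset_def intro!: sum_nonneg)
  ultimately show "Lag A Z L M D \<le> (1/2) * (norm (D - absm A))^2"
    by (simp add: Lag_def frob_norm)
qed

theorem theorem7:
  fixes A Z :: "real^'n::finite^'n" and c :: real
  assumes "c > 0" and "\<forall>i j. Z$i$j \<in> {0, 1}"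
  shows
    \<comment> \<open>g is the Lagrangian dual function: D(Lambda,M) attains the min over the spectral ball\<close>
    "(\<forall>\<Lambda> M. nonneg_mat M \<longrightarrow>
        spec (Dmat c A Z \<Lambda> M) \<le> c \<and>
        (\<forall>D. spec D \<le> c \<longrightarrow> gdual c A Z \<Lambda> M \<le> Lag A Z \<Lambda> M D))
   \<and> \<comment> \<open>gradients\<close>
     (\<forall>\<Lambda> M. nonneg_mat M \<longrightarrow>
        ((\<lambda>(L, N). gdual c A Z L N) has_derivative
           (\<lambda>(dL, dN). mdot (hadamard Z (Dmat c A Z \<Lambda> M)) dL - mdot (Dmat c A Z \<Lambda> M) dN))
        (at (\<Lambda>, M)))
   \<and> \<comment> \<open>equivalence: both optima attained, (1/2) p*^2 = max g\<close>
     (\<exists>\<Lambda> M B D. nonneg_mat M \<and>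
        (\<forall>\<Lambda>' M'. nonneg_mat M' \<longrightarrow> gdual c A Z \<Lambda>' M' \<le> gdual c A Z \<Lambda> M) \<and>
        feasP c Z B D \<and>
        (\<forall>B' D'. feasP c Z B' D' \<longrightarrow> frob (A - B) \<le> frob (A - B')) \<and>
        (1/2) * (frob (A - B))^2 = gdual c A Z \<Lambda> M)
   \<and> \<comment> \<open>any dual maximizer yields a primal solution via D(Lambda,M)\<close>
     (\<forall>\<Lambda> M. nonneg_mat M \<and>
        (\<forall>\<Lambda>' M'. nonneg_mat M' \<longrightarrow> gdual c A Z \<Lambda>' M' \<le> gdual c A Z \<Lambda> M) \<longrightarrow>
        (\<exists>B. feasP c Z B (Dmat c A Z \<Lambda> M) \<and>
           (\<forall>B' D'. feasP c Z B' D' \<longrightarrow> frob (A - B) \<le> frob (A - B'))))"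
proof -
  define R where "R = absm A"
  define C where "C = Kc c \<inter> Lset Z"
  have clC: "closed C" unfolding C_def by (intro closed_Int closed_Kc closed_Lset)
  define Ds where "Ds = closest_point C R"
  obtain \<Lambda>s Ms where DsC: "Ds \<in> C" and Ms: "nonneg_mat Ms" and DmS: "Dmat c A Z \<Lambda>s Ms = Ds"
      and gS: "gdual c A Z \<Lambda>s Ms = (1/2) * (norm (Ds - R))^2"
    using duality[OF assms] unfolding Ds_def C_def R_def by blast
  have opt: "norm (Ds - R) \<le> norm (D - R)" if "D \<in> C" for D
    using closest_point_le[OF clC that, of R] unfolding Ds_def by (simp add: dist_norm norm_minus_commute)
  have DsL: "Ds \<in> Lset Z" using DsC unfolding C_def by simp
  have wk: "gdual c A Z L M \<le> (1/2) * (norm (Ds - R))^2" if "nonneg_mat M" for L M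
    using weak_dual[OF assms(1) that DsC[unfolded C_def], where A=A and L=L] unfolding R_def by linarith
  have primal: "frob (A - Bst A Ds) \<le> frob (A - B')" if "feasP c Z B' D'" for B' D'
  proof -
    have "frob (A - Bst A Ds) = norm (Ds - R)" unfolding R_def by (rule Bst_frob[OF DsL])
    also have "\<dots> \<le> norm (D' - R)" using opt feas_C[OF that] unfolding C_def by blast
    also have "\<dots> \<le> frob (A - B')" unfolding R_def by (rule frob_ge[OF that])
    finally show ?thesis .
  qed
  have feasS: "feasP c Z (Bst A Ds) Ds" using Bst_feas DsC unfolding C_def by blast
  have P1: "\<forall>\<Lambda> M. nonneg_mat M \<longrightarrow>
        spec (Dmat c A Z \<Lambda> M) \<le> c \<and>
        (\<forall>D. spec D \<le> c \<longrightarrow> gdual c A Z \<Lambda> M \<le> Lag A Z \<Lambda> M D)"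
  proof (intro allI impI conjI)
    fix L M
    have s0: "spec (0::'n sqmat) \<le> c" using zero_Kc[of c] assms(1) by (simp add: Kc_def)
    show "spec (Dmat c A Z L M) \<le> c" using part1[OF assms(1) s0] by blast
    show "gdual c A Z L M \<le> Lag A Z L M D" if "spec D \<le> c" for D using part1[OF assms(1) that] by blast
  qed
  have P2: "\<forall>\<Lambda> M. nonneg_mat M \<longrightarrow>
        ((\<lambda>(L, N). gdual c A Z L N) has_derivative
           (\<lambda>(dL, dN). mdot (hadamard Z (Dmat c A Z \<Lambda> M)) dL - mdot (Dmat c A Z \<Lambda> M) dN))
        (at (\<Lambda>, M))"
    using part2[OF assms(1)] by blast
  have P3: "\<exists>\<Lambda> M B D. nonneg_mat M \<and>
        (\<forall>\<Lambda>' M'. nonneg_mat M' \<longrightarrow> gdual c A Z \<Lambda>' M' \<le> gdual c A Z \<Lambda> M) \<and>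
        feasP c Z B D \<and>
        (\<forall>B' D'. feasP c Z B' D' \<longrightarrow> frob (A - B) \<le> frob (A - B')) \<and>
        (1/2) * (frob (A - B))^2 = gdual c A Z \<Lambda> M"
  proof (intro exI conjI allI impI)
    show "nonneg_mat Ms" by (rule Ms)
    show "gdual c A Z L' M' \<le> gdual c A Z \<Lambda>s Ms" if "nonneg_mat M'" for L' M'
      using wk[OF that, of L'] gS by linarith
    show "feasP c Z (Bst A Ds) Ds" by (rule feasS)
    show "frob (A - Bst A Ds) \<le> frob (A - B')" if "feasP c Z B' D'" for B' D'
      by (rule primal[OF that])
    show "(1/2) * (frob (A - Bst A Ds))^2 = gdual c A Z \<Lambda>s Ms"
      using Bst_frob[OF DsL, of A] gS unfolding R_def by simp
  qed
  have P4: "\<forall>\<Lambda> M. nonneg_mat M \<and>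
        (\<forall>\<Lambda>' M'. nonneg_mat M' \<longrightarrow> gdual c A Z \<Lambda>' M' \<le> gdual c A Z \<Lambda> M) \<longrightarrow>
        (\<exists>B. feasP c Z B (Dmat c A Z \<Lambda> M) \<and>
           (\<forall>B' D'. feasP c Z B' D' \<longrightarrow> frob (A - B) \<le> frob (A - B')))"
  proof (intro allI impI)
    fix L M assume h: "nonneg_mat M \<and>
        (\<forall>\<Lambda>' M'. nonneg_mat M' \<longrightarrow> gdual c A Z \<Lambda>' M' \<le> gdual c A Z L M)"
    then have M: "nonneg_mat M" by simp
    have ge: "(1/2) * (norm (Ds - R))^2 \<le> gdual c A Z L M" using h Ms gS by metis
    have le: "Lag A Z L M Ds \<le> (1/2) * (norm (Ds - R))^2"
      using weak_dual(2)[OF assms(1) M DsC[unfolded C_def], where A=A and L=L] unfolding R_def .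
    define Y where "Y = absm A + M - hadamard L Z"
    have "Lag A Z L M Ds \<le> gdual c A Z L M" using ge le by linarith
    then have "(norm (Ds - Y))^2 \<le> (norm (PK c Y - Y))^2"
      unfolding gdual_def Lag_eq Dmat_PK[OF assms(1)] Y_def by simp
    then have n1: "norm (Ds - Y) \<le> norm (PK c Y - Y)" using power2_le_imp_le by force
    have "\<forall>z\<in>Kc c. dist Y Ds \<le> dist Y z"
    proof
      fix z :: "'n sqmat" assume "z \<in> Kc c"
      then have "norm (PK c Y - Y) \<le> norm (z - Y)" by (rule PK_le[OF assms(1)])
      then show "dist Y Ds \<le> dist Y z" using n1 by (simp add: dist_norm norm_minus_commute)
    qed
    then have "Ds = closest_point (Kc c) Y"
      using DsC unfolding C_def by (intro closest_point_unique convex_Kc closed_Kc) auto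
    then have "Dmat c A Z L M = Ds" unfolding Dmat_PK[OF assms(1)] PK_def Y_def by simp
    then show "\<exists>B. feasP c Z B (Dmat c A Z L M) \<and>
           (\<forall>B' D'. feasP c Z B' D' \<longrightarrow> frob (A - B) \<le> frob (A - B'))"
      using feasS primal by auto
  qed
  show ?thesis using P1 P2 P3 P4 by blast
qed

end
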